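(* If a semigroup $\langle A;\cdot\rangle$ is a Hamiltonian algebra, then for every $a\in A$ there exist integers $i,j$ with $1\le i<j$ such that $a^i=a^j$.
   Context: A semigroup is regarded as an algebra $\langle A;\cdot\rangle$ with one associative binary operation; its subalgebras are the nonempty subsets closed under $\cdot$. An algebra is called Hamiltonian if the universe of every subalgebra is an equivalence class (block) of some congruence of the algebra. *)

theory Defs
  imports Main
begin

definition semigroup_on :: "'a set \<Rightarrow> ('a \<Rightarrow> 'a \<Rightarrow> 'a) \<Rightarrow> bool" where
  "semigroup_on A f \<longleftrightarrow> (\<forall>x\<in>A. \<forall>y\<in>A. f x y \<in> A) \<and>
     (\<forall>x\<in>A. \<forall>y\<in>A. \<forall>z\<in>A. f (f x y) z = f x (f y z))"

definition subalgebra_on :: "'a set \<Rightarrow> ('a \<Rightarrow> 'a \<Rightarrow> 'a) \<Rightarrow> 'a set \<Rightarrow> bool" where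
  "subalgebra_on A f B \<longleftrightarrow> B \<noteq> {} \<and> B \<subseteq> A \<and> (\<forall>x\<in>B. \<forall>y\<in>B. f x y \<in> B)"

definition congruence_on :: "'a set \<Rightarrow> ('a \<Rightarrow> 'a \<Rightarrow> 'a) \<Rightarrow> 'a rel \<Rightarrow> bool" where
  "congruence_on A f \<theta> \<longleftrightarrow> equiv A \<theta> \<and>
     (\<forall>x x' y y'. (x, x') \<in> \<theta> \<longrightarrow> (y, y') \<in> \<theta> \<longrightarrow> (f x y, f x' y') \<in> \<theta>)"

definition hamiltonian_on :: "'a set \<Rightarrow> ('a \<Rightarrow> 'a \<Rightarrow> 'a) \<Rightarrow> bool" where
  "hamiltonian_on A f \<longleftrightarrow> (\<forall>B. subalgebra_on A f B \<longrightarrow>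
     (\<exists>\<theta>. congruence_on A f \<theta> \<and> B \<in> A // \<theta>))"

text \<open>Positive powers: spow f a n = a^(n+1).\<close>
fun spow :: "('a \<Rightarrow> 'a \<Rightarrow> 'a) \<Rightarrow> 'a \<Rightarrow> nat \<Rightarrow> 'a" where
  "spow f a 0 = a"
| "spow f a (Suc n) = f (spow f a n) a"

definition pow1 :: "('a \<Rightarrow> 'a \<Rightarrow> 'a) \<Rightarrow> 'a \<Rightarrow> nat \<Rightarrow> 'a" where
  "pow1 f a i = spow f a (i - 1)"

end

theory Submission
  imports Defs
begin

lemma spow_in: "semigroup_on A f \<Longrightarrow> a \<in> A \<Longrightarrow> spow f a n \<in> A"
  by (induction n) (auto simp: semigroup_on_def)

lemma spow_mult: "semigroup_on A f \<Longrightarrow> a \<in> A \<Longrightarrow>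
   f (spow f a m) (spow f a n) = spow f a (m + n + 1)"
proof (induction n)
  case 0 then show ?case by simp
next
  case (Suc n)
  have "f (spow f a m) (spow f a (Suc n)) = f (spow f a m) (f (spow f a n) a)" by simp
  also have "\<dots> = f (f (spow f a m) (spow f a n)) a"
    using Suc.prems spow_in[OF Suc.prems] unfolding semigroup_on_def by metis
  also have "\<dots> = spow f a (m + Suc n + 1)" using Suc by simp
  finally show ?case .
qed

theorem mainTheorem4:
  fixes A :: "'a set" and f :: "'a \<Rightarrow> 'a \<Rightarrow> 'a"
  assumes "semigroup_on A f"
    and "hamiltonian_on A f"
  shows "\<forall>a\<in>A. \<exists>i j :: nat. 1 \<le> i \<and> i < j \<and> pow1 f a i = pow1 f a j"
proof (rule ballI, rule ccontr)
  fix a assume aA: "a \<in> A" and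
    H: "\<not> (\<exists>i j :: nat. 1 \<le> i \<and> i < j \<and> pow1 f a i = pow1 f a j)"
  have inj: "spow f a m = spow f a n \<Longrightarrow> m = n" for m n
  proof (rule ccontr)
    assume e: "spow f a m = spow f a n" and ne: "m \<noteq> n"
    show False
    proof (cases "m < n")
      case True
      then show False using H e
        by (metis One_nat_def Suc_le_mono add_diff_cancel_left' le0 plus_1_eq_Suc pow1_def Suc_mono)
    next
      case False
      then have "n < m" using ne by simp
      then show False using H e
        by (metis One_nat_def Suc_le_mono add_diff_cancel_left' le0 plus_1_eq_Suc pow1_def Suc_mono)
    qed
  qed
  define B where "B = {spow f a 1} \<union> {spow f a n | n. n \<ge> 3}"
  have sub: "subalgebra_on A f B"
    unfolding subalgebra_on_def
  proof (intro conjI ballI)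
    show "B \<noteq> {}" unfolding B_def by blast
    show "B \<subseteq> A" unfolding B_def using spow_in[OF assms(1) aA] by blast
  next
    fix x y assume "x \<in> B" "y \<in> B"
    then obtain m n where "x = spow f a m" "y = spow f a n" "m \<ge> 1" "n \<ge> 1"
      unfolding B_def by (auto simp del: spow.simps)
    then have "f x y = spow f a (m + n + 1)" "m + n + 1 \<ge> 3"
      using spow_mult[OF assms(1) aA] by auto
    then show "f x y \<in> B" unfolding B_def by blast
  qed
  then obtain \<theta> where c: "congruence_on A f \<theta>" and blk: "B \<in> A // \<theta>"
    using assms(2) unfolding hamiltonian_on_def by blast
  have eq: "equiv A \<theta>" using c unfolding congruence_on_def by blast
  obtain x where xA: "x \<in> A" and Bx: "B = \<theta> `` {x}"
    using blk unfolding quotient_def by blast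
  have b1: "spow f a 1 \<in> B" and b3: "spow f a 3 \<in> B" and b4: "spow f a 4 \<in> B"
    unfolding B_def by auto
  have "(spow f a 1, spow f a 3) \<in> \<theta>"
    using b1 b3 Bx eq by (metis Image_singleton_iff equiv_def symD transD)
  moreover have "(a, a) \<in> \<theta>" using eq aA by (meson equiv_def refl_onD)
  ultimately have "(f (spow f a 1) a, f (spow f a 3) a) \<in> \<theta>"
    using c unfolding congruence_on_def by blast
  then have r: "(spow f a 2, spow f a 4) \<in> \<theta>" by (simp add: numeral_eq_Suc)
  have "(x, spow f a 4) \<in> \<theta>" using b4 Bx by blast
  then have "(x, spow f a 2) \<in> \<theta>" using r eq by (metis equiv_def symD transD)
  then have "spow f a 2 \<in> B" using Bx by blast
  then obtain n where "n = 1 \<or> n \<ge> 3" "spow f a 2 = spow f a n" unfolding B_def by (auto simp del: spow.simps)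
  then show False using inj by force
qed

end
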